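(* Let $\mathcal M_1=(X_1,\mathcal N_1,V_1)$ and $\mathcal M_2=(X_2,\mathcal N_2,V_2)$ be quasi-discrete neighbourhood models. (1) If $(Z_{\mathcal N},Z_1,Z_2)$ is a path preserving bisimulation between $\mathcal M_1$ and $\mathcal M_2$, then $Z_{\mathcal N}$ is a modal bisimulation with converse. (2) If $\rho\subseteq X_1\times X_2$ is a non-empty modal bisimulation with converse, then there exist relations $Z_1,Z_2$ such that $(\rho,Z_1,Z_2)$ is a path preserving bisimulation between $\mathcal M_1$ and $\mathcal M_2$.
   Context: A neighbourhood space $(X,\mathcal N)$ assigns to each $x\in X$ a filter $\mathcal N(x)$ on $X$ (closed under finite intersections and supersets, not containing $\emptyset$) such that $x\in N$ for all $N\in\mathcal N(x)$. It is quasi-discrete if each $x$ has a minimal neighbourhood $N_{\min}(x)\in\mathcal N(x)$ contained in every element of $\mathcal N(x)$. A quasi-discrete neighbourhood model $(X,\mathcal N,V)$ has a quasi-discrete space, index space $\mathbb N$ with usual order, least element $0$ and $N_{\min}(n)=\{n,n+1\}$, and a valuation $V:X\to\mathcal P(\mathsf P)$ for a countable set $\mathsf P$ of atoms. A path is a continuous map $p:\mathbb N\to X$, equivalently $p(n+1)\in N_{\min}(p(n))$ for all $n$. Induced edge relation: $R=\{(x,y)\mid y\in N_{\min}(x)\}$. Modal bisimulation with converse: $\rho\subseteq X_1\times X_2$ such that for every pair $x_1\rho x_2$: $V_1(x_1)=V_2(x_2)$; if $(x_1,y_1)\in R_1$ then there is $y_2$ with $(x_2,y_2)\in R_2$ and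 $y_1\rho y_2$; if $(x_2,y_2)\in R_2$ then there is $y_1$ with $(x_1,y_1)\in R_1$ and $y_1\rho y_2$; if $(y_1,x_1)\in R_1$ then there is $y_2$ with $(y_2,x_2)\in R_2$ and $y_1\rho y_2$; if $(y_2,x_2)\in R_2$ then there is $y_1$ with $(y_1,x_1)\in R_1$ and $y_1\rho y_2$. Path preserving bisimulation: with path sets $\mathcal P_1,\mathcal P_2$ and index set $I=\mathbb N$, a triple $(Z_{\mathcal N},Z_1,Z_2)$, $\emptyset\ne Z_{\mathcal N}\subseteq X_1\times X_2$, $Z_1\subseteq(\mathcal P_1\times I)\times(\mathcal P_2\times I)$, $Z_2\subseteq(\mathcal P_2\times I)\times(\mathcal P_1\times I)$, such that: (1) at each pair $x_1Z_{\mathcal N}x_2$: $V_1(x_1)=V_2(x_2)$; for every $N_2\in\mathcal N_2(x_2)$ there is $N_1\in\mathcal N_1(x_1)$ with every $y_1\in N_1$ related to some $y_2\in N_2$; and for every $N_1\in\mathcal N_1(x_1)$ there is $N_2\in\mathcal N_2(x_2)$ with every $y_2\in N_2$ related to some $y_1\in N_1$; (2) if $x_1Z_{\mathcal N}x_2$, $p(0)=x_1$, $n\ne0$, there are $q$ with $q(0)=x_2$ and $m$ with $p(n)Z_{\mathcal N}q(m)$, $(p,n)Z_1(q,m)$; (3) if $x_1Z_{\mathcal N}x_2$, $p(n)=x_1$, $n\ne0$, there are $q,m$ with $q(m)=x_2$, $p(0)Z_{\mathcal N}q(0)$, $(p,n)Z_1(q,m)$; (4) if $(p,n)Z_1(q,m)$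 and $0<k_q<m$, there is $0<k_p<n$ with $p(k_p)Z_{\mathcal N}q(k_q)$; (5) if $x_1Z_{\mathcal N}x_2$, $q(0)=x_2$, $m\ne0$, there are $p$ with $p(0)=x_1$ and $n$ with $p(n)Z_{\mathcal N}q(m)$, $(q,m)Z_2(p,n)$; (6) if $x_1Z_{\mathcal N}x_2$, $q(m)=x_2$, $m\neq0$, there are $p,n$ with $p(n)=x_1$, $p(0)Z_{\mathcal N}q(0)$, $(q,m)Z_2(p,n)$; (7) if $(q,m)Z_2(p,n)$ and $0<k_p<n$, there is $0<k_q<m$ with $p(k_p)Z_{\mathcal N}q(k_q)$. *)

theory Defs
  imports Main "HOL-Library.Countable"
begin

definition nbhd_space :: "'a set \<Rightarrow> ('a \<Rightarrow> 'a set set) \<Rightarrow> bool" where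
  "nbhd_space X N \<longleftrightarrow>
     (\<forall>x\<in>X. X \<in> N x \<and> {} \<notin> N x
        \<and> (\<forall>S\<in>N x. S \<subseteq> X \<and> x \<in> S)
        \<and> (\<forall>S\<in>N x. \<forall>T\<in>N x. S \<inter> T \<in> N x)
        \<and> (\<forall>S\<in>N x. \<forall>T. S \<subseteq> T \<and> T \<subseteq> X \<longrightarrow> T \<in> N x))"

definition quasi_discrete :: "'a set \<Rightarrow> ('a \<Rightarrow> 'a set set) \<Rightarrow> bool" where
  "quasi_discrete X N \<longleftrightarrow> nbhd_space X N \<and> (\<forall>x\<in>X. \<exists>M\<in>N x. \<forall>S\<in>N x. M \<subseteq> S)"

definition Nmin :: "('a \<Rightarrow> 'a set set) \<Rightarrow> 'a \<Rightarrow> 'a set" where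
  "Nmin N x = (THE M. M \<in> N x \<and> (\<forall>S\<in>N x. M \<subseteq> S))"

definition qd_model :: "'a set \<Rightarrow> ('a \<Rightarrow> 'a set set) \<Rightarrow> ('a \<Rightarrow> 'p::countable set) \<Rightarrow> bool" where
  "qd_model X N V \<longleftrightarrow> quasi_discrete X N"

text \<open>Index space: naturals with minimal neighbourhood {n, n+1}.\<close>
definition nat_nbhd :: "nat \<Rightarrow> nat set set" where
  "nat_nbhd n = {S. {n, Suc n} \<subseteq> S}"

text \<open>Paths: continuous maps from the index space into (X, N).\<close>
definition is_path :: "'a set \<Rightarrow> ('a \<Rightarrow> 'a set set) \<Rightarrow> (nat \<Rightarrow> 'a) \<Rightarrow> bool" where
  "is_path X N p \<longleftrightarrow> (\<forall>n. p n \<in> X \<and> (\<forall>S\<in>N (p n). {k. p k \<in> S} \<in> nat_nbhd n))"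

definition paths :: "'a set \<Rightarrow> ('a \<Rightarrow> 'a set set) \<Rightarrow> (nat \<Rightarrow> 'a) set" where
  "paths X N = {p. is_path X N p}"

definition edges :: "'a set \<Rightarrow> ('a \<Rightarrow> 'a set set) \<Rightarrow> ('a \<times> 'a) set" where
  "edges X N = {(x, y). x \<in> X \<and> y \<in> Nmin N x}"

definition modal_bisim_conv ::
  "'a set \<Rightarrow> ('a \<Rightarrow> 'a set set) \<Rightarrow> ('a \<Rightarrow> 'p set) \<Rightarrow>
   'b set \<Rightarrow> ('b \<Rightarrow> 'b set set) \<Rightarrow> ('b \<Rightarrow> 'p set) \<Rightarrow> ('a \<times> 'b) set \<Rightarrow> bool" where
  "modal_bisim_conv X1 N1 V1 X2 N2 V2 \<rho> \<longleftrightarrow>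
     \<rho> \<subseteq> X1 \<times> X2 \<and>
     (\<forall>(x1, x2)\<in>\<rho>.
        V1 x1 = V2 x2
      \<and> (\<forall>y1. (x1, y1) \<in> edges X1 N1 \<longrightarrow> (\<exists>y2. (x2, y2) \<in> edges X2 N2 \<and> (y1, y2) \<in> \<rho>))
      \<and> (\<forall>y2. (x2, y2) \<in> edges X2 N2 \<longrightarrow> (\<exists>y1. (x1, y1) \<in> edges X1 N1 \<and> (y1, y2) \<in> \<rho>))
      \<and> (\<forall>y1. (y1, x1) \<in> edges X1 N1 \<longrightarrow> (\<exists>y2. (y2, x2) \<in> edges X2 N2 \<and> (y1, y2) \<in> \<rho>))
      \<and> (\<forall>y2. (y2, x2) \<in> edges X2 N2 \<longrightarrow> (\<exists>y1. (y1, x1) \<in> edges X1 N1 \<and> (y1, y2) \<in> \<rho>)))"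

definition path_pres_bisim ::
  "'a set \<Rightarrow> ('a \<Rightarrow> 'a set set) \<Rightarrow> ('a \<Rightarrow> 'p set) \<Rightarrow>
   'b set \<Rightarrow> ('b \<Rightarrow> 'b set set) \<Rightarrow> ('b \<Rightarrow> 'p set) \<Rightarrow>
   ('a \<times> 'b) set \<Rightarrow> (((nat \<Rightarrow> 'a) \<times> nat) \<times> ((nat \<Rightarrow> 'b) \<times> nat)) set \<Rightarrow>
   (((nat \<Rightarrow> 'b) \<times> nat) \<times> ((nat \<Rightarrow> 'a) \<times> nat)) set \<Rightarrow> bool" where
  "path_pres_bisim X1 N1 V1 X2 N2 V2 ZN Z1 Z2 \<longleftrightarrow>
     ZN \<noteq> {} \<and> ZN \<subseteq> X1 \<times> X2
   \<and> Z1 \<subseteq> (paths X1 N1 \<times> UNIV) \<times> (paths X2 N2 \<times> UNIV)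
   \<and> Z2 \<subseteq> (paths X2 N2 \<times> UNIV) \<times> (paths X1 N1 \<times> UNIV)
   \<comment> \<open>(1)\<close>
   \<and> (\<forall>(x1, x2)\<in>ZN.
        V1 x1 = V2 x2
      \<and> (\<forall>S2\<in>N2 x2. \<exists>S1\<in>N1 x1. \<forall>y1\<in>S1. \<exists>y2\<in>S2. (y1, y2) \<in> ZN)
      \<and> (\<forall>S1\<in>N1 x1. \<exists>S2\<in>N2 x2. \<forall>y2\<in>S2. \<exists>y1\<in>S1. (y1, y2) \<in> ZN))
   \<comment> \<open>(2)\<close>
   \<and> (\<forall>(x1, x2)\<in>ZN. \<forall>p\<in>paths X1 N1. \<forall>n. p 0 = x1 \<and> n \<noteq> 0 \<longrightarrow>
        (\<exists>q\<in>paths X2 N2. \<exists>m. q 0 = x2 \<and> (p n, q m) \<in> ZN \<and> ((p, n), (q, m)) \<in> Z1))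
   \<comment> \<open>(3)\<close>
   \<and> (\<forall>(x1, x2)\<in>ZN. \<forall>p\<in>paths X1 N1. \<forall>n. p n = x1 \<and> n \<noteq> 0 \<longrightarrow>
        (\<exists>q\<in>paths X2 N2. \<exists>m. q m = x2 \<and> (p 0, q 0) \<in> ZN \<and> ((p, n), (q, m)) \<in> Z1))
   \<comment> \<open>(4)\<close>
   \<and> (\<forall>p n q m. ((p, n), (q, m)) \<in> Z1 \<longrightarrow>
        (\<forall>kq. 0 < kq \<and> kq < m \<longrightarrow> (\<exists>kp. 0 < kp \<and> kp < n \<and> (p kp, q kq) \<in> ZN)))
   \<comment> \<open>(5)\<close>
   \<and> (\<forall>(x1, x2)\<in>ZN. \<forall>q\<in>paths X2 N2. \<forall>m. q 0 = x2 \<and> m \<noteq> 0 \<longrightarrow>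
        (\<exists>p\<in>paths X1 N1. \<exists>n. p 0 = x1 \<and> (p n, q m) \<in> ZN \<and> ((q, m), (p, n)) \<in> Z2))
   \<comment> \<open>(6)\<close>
   \<and> (\<forall>(x1, x2)\<in>ZN. \<forall>q\<in>paths X2 N2. \<forall>m. q m = x2 \<and> m \<noteq> 0 \<longrightarrow>
        (\<exists>p\<in>paths X1 N1. \<exists>n. p n = x1 \<and> (p 0, q 0) \<in> ZN \<and> ((q, m), (p, n)) \<in> Z2))
   \<comment> \<open>(7)\<close>
   \<and> (\<forall>q m p n. ((q, m), (p, n)) \<in> Z2 \<longrightarrow>
        (\<forall>kp. 0 < kp \<and> kp < n \<longrightarrow> (\<exists>kq. 0 < kq \<and> kq < m \<and> (p kp, q kq) \<in> ZN)))"

end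

theory Submission
  imports Defs
begin

lemma Nmin_prop:
  assumes "quasi_discrete X N" "x \<in> X"
  shows "Nmin N x \<in> N x \<and> (\<forall>S\<in>N x. Nmin N x \<subseteq> S)"
proof -
  from assms obtain M where M: "M \<in> N x" "\<forall>S\<in>N x. M \<subseteq> S"
    unfolding quasi_discrete_def by blast
  have "\<exists>!M. M \<in> N x \<and> (\<forall>S\<in>N x. M \<subseteq> S)"
    using M by (intro ex1I[of _ M]) auto
  then show ?thesis unfolding Nmin_def by (rule theI')
qed

lemma self_in_nbhd:
  assumes "quasi_discrete X N" "x \<in> X" "S \<in> N x" shows "x \<in> S"
  using assms unfolding quasi_discrete_def nbhd_space_def by blast

lemma self_edge:
  assumes "quasi_discrete X N" "x \<in> X" shows "(x, x) \<in> edges X N"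
  using Nmin_prop[OF assms] self_in_nbhd[OF assms] assms(2) unfolding edges_def by auto

lemma path_edges:
  assumes "quasi_discrete X N" "p \<in> paths X N"
  shows "(p k, p (Suc k)) \<in> edges X N"
proof -
  have X: "p k \<in> X" using assms(2) unfolding paths_def is_path_def by auto
  have "{j. p j \<in> Nmin N (p k)} \<in> nat_nbhd k"
    using assms(2) Nmin_prop[OF assms(1) X] unfolding paths_def is_path_def by auto
  then show ?thesis using X unfolding nat_nbhd_def edges_def by auto
qed

lemma edges_path:
  assumes "quasi_discrete X N" "\<And>k. (q k, q (Suc k)) \<in> edges X N"
  shows "q \<in> paths X N"
  unfolding paths_def is_path_def
proof (intro CollectI allI conjI ballI)
  fix n
  have X: "q n \<in> X" and e: "q (Suc n) \<in> Nmin N (q n)" using assms(2)[of n] unfolding edges_def by auto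
  show "q n \<in> X" by (rule X)
  fix S assume S: "S \<in> N (q n)"
  have "q n \<in> S" using self_in_nbhd[OF assms(1) X S] .
  moreover have "q (Suc n) \<in> S" using Nmin_prop[OF assms(1) X] S e by blast
  ultimately show "{k. q k \<in> S} \<in> nat_nbhd n" unfolding nat_nbhd_def by auto
qed

lemma mb_sym:
  assumes "modal_bisim_conv X1 N1 V1 X2 N2 V2 \<rho>"
  shows "modal_bisim_conv X2 N2 V2 X1 N1 V1 (converse \<rho>)"
  using assms unfolding modal_bisim_conv_def by fastforce

lemma lift_path:
  assumes q1: "quasi_discrete X1 N1" and q2: "quasi_discrete X2 N2"
    and mb: "modal_bisim_conv X1 N1 V1 X2 N2 V2 \<rho>"
    and p: "p \<in> paths X1 N1" and py: "(p n, y) \<in> \<rho>"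
  shows "\<exists>q\<in>paths X2 N2. q n = y \<and> (\<forall>k. (p k, q k) \<in> \<rho>)"
proof -
  have fw: "\<And>x z x'. (x, z) \<in> \<rho> \<Longrightarrow> (x, x') \<in> edges X1 N1 \<Longrightarrow> \<exists>z'. (z, z') \<in> edges X2 N2 \<and> (x', z') \<in> \<rho>"
    using mb unfolding modal_bisim_conv_def by blast
  have bw: "\<And>x z x'. (x, z) \<in> \<rho> \<Longrightarrow> (x', x) \<in> edges X1 N1 \<Longrightarrow> \<exists>z'. (z', z) \<in> edges X2 N2 \<and> (x', z') \<in> \<rho>"
    using mb unfolding modal_bisim_conv_def by blast
  define F where "F x' z = (SOME z'. (z, z') \<in> edges X2 N2 \<and> (x', z') \<in> \<rho>)" for x' z
  define B where "B x' z = (SOME z'. (z', z) \<in> edges X2 N2 \<and> (x', z') \<in> \<rho>)" for x' z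
  define f where "f = rec_nat y (\<lambda>j z. F (p (n + Suc j)) z)"
  define b where "b = rec_nat y (\<lambda>j z. B (p (n - Suc j)) z)"
  have f0: "f 0 = y" and fS: "f (Suc j) = F (p (n + Suc j)) (f j)" for j unfolding f_def by simp_all
  have b0: "b 0 = y" and bS: "b (Suc j) = B (p (n - Suc j)) (b j)" for j unfolding b_def by simp_all
  have finv: "(p (n + j), f j) \<in> \<rho> \<and> (f j, f (Suc j)) \<in> edges X2 N2" for j
  proof (induction j)
    case 0
    have e: "(p n, p (n + Suc 0)) \<in> edges X1 N1" using path_edges[OF q1 p, of n] by simp
    from someI_ex[OF fw[OF py e]] show ?case unfolding fS f0 F_def using py by simp
  next
    case (Suc j)
    have r: "(p (n + Suc j), f (Suc j)) \<in> \<rho>" using Suc someI_ex[OF fw[OF _ path_edges[OF q1 p, of "n+j"]], of "f j"]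
      unfolding fS F_def by simp
    have e: "(p (n + Suc j), p (n + Suc (Suc j))) \<in> edges X1 N1" using path_edges[OF q1 p, of "n + Suc j"] by simp
    from someI_ex[OF fw[OF r e]] r show ?case unfolding fS[of "Suc j"] F_def by simp
  qed
  have binv: "j \<le> n \<Longrightarrow> (p (n - j), b j) \<in> \<rho> \<and> (j < n \<longrightarrow> (b (Suc j), b j) \<in> edges X2 N2)" for j
  proof (induction j)
    case 0
    show ?case
    proof (intro conjI impI)
      show "(p (n - 0), b 0) \<in> \<rho>" using py b0 by simp
      assume "0 < n"
      then have e: "(p (n - Suc 0), p (n - 0)) \<in> edges X1 N1" using path_edges[OF q1 p, of "n - 1"] by simp
      from someI_ex[OF bw[OF _ e]] py show "(b (Suc 0), b 0) \<in> edges X2 N2" unfolding bS B_def b0 by simp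
    qed
  next
    case (Suc j)
    then have lt: "j < n" by simp
    have e: "(p (n - Suc j), p (n - j)) \<in> edges X1 N1" using path_edges[OF q1 p, of "n - Suc j"] lt
      by (simp add: Suc_diff_Suc)
    have r0: "(p (n - j), b j) \<in> \<rho>" using Suc lt by simp
    have r: "(p (n - Suc j), b (Suc j)) \<in> \<rho>" using someI_ex[OF bw[OF r0 e]] unfolding bS B_def by simp
    show ?case
    proof (intro conjI impI)
      show "(p (n - Suc j), b (Suc j)) \<in> \<rho>" by (rule r)
      assume "Suc j < n"
      then have e2: "(p (n - Suc (Suc j)), p (n - Suc j)) \<in> edges X1 N1" using path_edges[OF q1 p, of "n - Suc (Suc j)"]
        by (simp add: Suc_diff_Suc)
      from someI_ex[OF bw[OF r e2]] show "(b (Suc (Suc j)), b (Suc j)) \<in> edges X2 N2" unfolding bS[of "Suc j"] B_def by simp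
    qed
  qed
  define q where "q k = (if n \<le> k then f (k - n) else b (n - k))" for k
  have qe: "(q k, q (Suc k)) \<in> edges X2 N2" for k
  proof (cases "n \<le> k")
    case True
    then show ?thesis using finv[of "k - n"] unfolding q_def by (simp add: Suc_diff_le)
  next
    case False
    then have "n - k = Suc (n - Suc k)" by simp
    moreover have "(b (Suc (n - Suc k)), b (n - Suc k)) \<in> edges X2 N2" using binv[of "n - Suc k"] False by simp
    ultimately show ?thesis using False f0 b0 unfolding q_def by (cases "n = Suc k") auto
  qed
  have qr: "(p k, q k) \<in> \<rho>" for k
  proof (cases "n \<le> k")
    case True then show ?thesis using finv[of "k - n"] unfolding q_def by simp
  next
    case False then show ?thesis using binv[of "n - k"] unfolding q_def by simp
  qed
  have "q \<in> paths X2 N2" by (rule edges_path[OF q2]) (rule qe)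
  moreover have "q n = y" using f0 unfolding q_def by simp
  ultimately show ?thesis using qr by blast
qed

lemma part1:
  assumes q1: "quasi_discrete X1 N1" and q2: "quasi_discrete X2 N2"
    and pp: "path_pres_bisim X1 N1 V1 X2 N2 V2 ZN Z1 Z2"
  shows "modal_bisim_conv X1 N1 V1 X2 N2 V2 ZN"
proof -
  note D = pp[unfolded path_pres_bisim_def]
  have sub: "ZN \<subseteq> X1 \<times> X2" using D by (elim conjE) assumption
  have c1': "\<forall>(x1, x2)\<in>ZN.
        V1 x1 = V2 x2
      \<and> (\<forall>S2\<in>N2 x2. \<exists>S1\<in>N1 x1. \<forall>y1\<in>S1. \<exists>y2\<in>S2. (y1, y2) \<in> ZN)
      \<and> (\<forall>S1\<in>N1 x1. \<exists>S2\<in>N2 x2. \<forall>y2\<in>S2. \<exists>y1\<in>S1. (y1, y2) \<in> ZN)"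
    using D by (elim conjE) assumption
  have c3': "\<forall>(x1, x2)\<in>ZN. \<forall>p\<in>paths X1 N1. \<forall>n. p n = x1 \<and> n \<noteq> 0 \<longrightarrow>
        (\<exists>q\<in>paths X2 N2. \<exists>m. q m = x2 \<and> (p 0, q 0) \<in> ZN \<and> ((p, n), (q, m)) \<in> Z1)"
    using D by (elim conjE) assumption
  have c4': "\<forall>p n q m. ((p, n), (q, m)) \<in> Z1 \<longrightarrow>
        (\<forall>kq. 0 < kq \<and> kq < m \<longrightarrow> (\<exists>kp. 0 < kp \<and> kp < n \<and> (p kp, q kq) \<in> ZN))"
    using D by (elim conjE) assumption
  have c6': "\<forall>(x1, x2)\<in>ZN. \<forall>q\<in>paths X2 N2. \<forall>m. q m = x2 \<and> m \<noteq> 0 \<longrightarrow>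
        (\<exists>p\<in>paths X1 N1. \<exists>n. p n = x1 \<and> (p 0, q 0) \<in> ZN \<and> ((q, m), (p, n)) \<in> Z2)"
    using D by (elim conjE) assumption
  have c7': "\<forall>q m p n. ((q, m), (p, n)) \<in> Z2 \<longrightarrow>
        (\<forall>kp. 0 < kp \<and> kp < n \<longrightarrow> (\<exists>kq. 0 < kq \<and> kq < m \<and> (p kp, q kq) \<in> ZN))"
    using D by (elim conjE) assumption
  have c1: "\<And>x1 x2. (x1, x2) \<in> ZN \<Longrightarrow> V1 x1 = V2 x2
      \<and> (\<forall>S2\<in>N2 x2. \<exists>S1\<in>N1 x1. \<forall>y1\<in>S1. \<exists>y2\<in>S2. (y1, y2) \<in> ZN)
      \<and> (\<forall>S1\<in>N1 x1. \<exists>S2\<in>N2 x2. \<forall>y2\<in>S2. \<exists>y1\<in>S1. (y1, y2) \<in> ZN)"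
    using c1' by auto
  have c3: "\<And>x1 x2 p n. (x1, x2) \<in> ZN \<Longrightarrow> p \<in> paths X1 N1 \<Longrightarrow> p n = x1 \<Longrightarrow> n \<noteq> 0 \<Longrightarrow>
        (\<exists>q\<in>paths X2 N2. \<exists>m. q m = x2 \<and> (p 0, q 0) \<in> ZN \<and> ((p, n), (q, m)) \<in> Z1)"
    using c3' by auto
  have c4: "\<And>p n q m kq. ((p, n), (q, m)) \<in> Z1 \<Longrightarrow> 0 < kq \<Longrightarrow> kq < m \<Longrightarrow> (\<exists>kp. 0 < kp \<and> kp < n \<and> (p kp, q kq) \<in> ZN)"
    using c4' by blast
  have c6: "\<And>x1 x2 q m. (x1, x2) \<in> ZN \<Longrightarrow> q \<in> paths X2 N2 \<Longrightarrow> q m = x2 \<Longrightarrow> m \<noteq> 0 \<Longrightarrow>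
        (\<exists>p\<in>paths X1 N1. \<exists>n. p n = x1 \<and> (p 0, q 0) \<in> ZN \<and> ((q, m), (p, n)) \<in> Z2)"
    using c6' by auto
  have c7: "\<And>q m p n kp. ((q, m), (p, n)) \<in> Z2 \<Longrightarrow> 0 < kp \<Longrightarrow> kp < n \<Longrightarrow> (\<exists>kq. 0 < kq \<and> kq < m \<and> (p kp, q kq) \<in> ZN)"
    using c7' by blast
  have H: "\<forall>(x1, x2)\<in>ZN.
        V1 x1 = V2 x2
      \<and> (\<forall>y1. (x1, y1) \<in> edges X1 N1 \<longrightarrow> (\<exists>y2. (x2, y2) \<in> edges X2 N2 \<and> (y1, y2) \<in> ZN))
      \<and> (\<forall>y2. (x2, y2) \<in> edges X2 N2 \<longrightarrow> (\<exists>y1. (x1, y1) \<in> edges X1 N1 \<and> (y1, y2) \<in> ZN))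
      \<and> (\<forall>y1. (y1, x1) \<in> edges X1 N1 \<longrightarrow> (\<exists>y2. (y2, x2) \<in> edges X2 N2 \<and> (y1, y2) \<in> ZN))
      \<and> (\<forall>y2. (y2, x2) \<in> edges X2 N2 \<longrightarrow> (\<exists>y1. (y1, x1) \<in> edges X1 N1 \<and> (y1, y2) \<in> ZN))"
  proof (intro ballI, clarify, intro conjI allI impI)
    fix x1 x2 assume r: "(x1, x2) \<in> ZN"
    have X1: "x1 \<in> X1" and X2: "x2 \<in> X2" using r sub by auto
    note m1 = Nmin_prop[OF q1 X1] and m2 = Nmin_prop[OF q2 X2]
    show "V1 x1 = V2 x2" using c1[OF r] by blast
    {
      fix y1 assume e: "(x1, y1) \<in> edges X1 N1"
      obtain S1 where S1: "S1 \<in> N1 x1" "\<forall>y1\<in>S1. \<exists>y2\<in>Nmin N2 x2. (y1, y2) \<in> ZN"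
      proof -
        have "\<forall>S2\<in>N2 x2. \<exists>S1\<in>N1 x1. \<forall>y1\<in>S1. \<exists>y2\<in>S2. (y1, y2) \<in> ZN" using c1[OF r] by (elim conjE)
        from bspec[OF this conjunct1[OF m2]] show ?thesis using that by blast
      qed
      have "y1 \<in> S1" using e m1 S1(1) unfolding edges_def by blast
      then obtain y2 where "y2 \<in> Nmin N2 x2" "(y1, y2) \<in> ZN" using S1 by blast
      then show "\<exists>y2. (x2, y2) \<in> edges X2 N2 \<and> (y1, y2) \<in> ZN" using X2 unfolding edges_def by blast
    }
    {
      fix y2 assume e: "(x2, y2) \<in> edges X2 N2"
      obtain S2 where S2: "S2 \<in> N2 x2" "\<forall>y2\<in>S2. \<exists>y1\<in>Nmin N1 x1. (y1, y2) \<in> ZN"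
      proof -
        have "\<forall>S1\<in>N1 x1. \<exists>S2\<in>N2 x2. \<forall>y2\<in>S2. \<exists>y1\<in>S1. (y1, y2) \<in> ZN" using c1[OF r] by (elim conjE)
        from bspec[OF this conjunct1[OF m1]] show ?thesis using that by blast
      qed
      have "y2 \<in> S2" using e m2 S2(1) unfolding edges_def by blast
      then obtain y1 where "y1 \<in> Nmin N1 x1" "(y1, y2) \<in> ZN" using S2 by blast
      then show "\<exists>y1. (x1, y1) \<in> edges X1 N1 \<and> (y1, y2) \<in> ZN" using X1 unfolding edges_def by blast
    }
    {
      fix y1 assume e: "(y1, x1) \<in> edges X1 N1"
      define p where "p k = (if k = 0 then y1 else x1)" for k :: nat
      have "p \<in> paths X1 N1"
      proof (rule edges_path[OF q1])
        fix k show "(p k, p (Suc k)) \<in> edges X1 N1"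
          using e self_edge[OF q1 X1] unfolding p_def by auto
      qed
      then obtain q m where q: "q \<in> paths X2 N2" "q m = x2" "(p 0, q 0) \<in> ZN" "((p, 1), (q, m)) \<in> Z1"
        using c3[OF r, of p 1] unfolding p_def by auto
      have "m \<le> 1"
      proof (rule ccontr)
        assume "\<not> m \<le> 1"
        then obtain kp where "0 < kp" "kp < (1::nat)" using c4[OF q(4), of 1] by auto
        then show False by simp
      qed
      then consider "m = 0" | "m = 1" by linarith
      then show "\<exists>y2. (y2, x2) \<in> edges X2 N2 \<and> (y1, y2) \<in> ZN"
      proof cases
        case 1 then show ?thesis using q self_edge[OF q2 X2] unfolding p_def by auto
      next
        case 2 then show ?thesis using q path_edges[OF q2 q(1), of 0] unfolding p_def by auto
      qed
    }
    {
      fix y2 assume e: "(y2, x2) \<in> edges X2 N2"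
      define q where "q k = (if k = 0 then y2 else x2)" for k :: nat
      have "q \<in> paths X2 N2"
      proof (rule edges_path[OF q2])
        fix k show "(q k, q (Suc k)) \<in> edges X2 N2"
          using e self_edge[OF q2 X2] unfolding q_def by auto
      qed
      then obtain p n where p: "p \<in> paths X1 N1" "p n = x1" "(p 0, q 0) \<in> ZN" "((q, 1), (p, n)) \<in> Z2"
        using c6[OF r, of q 1] unfolding q_def by auto
      have "n \<le> 1"
      proof (rule ccontr)
        assume "\<not> n \<le> 1"
        then obtain kq where "0 < kq" "kq < (1::nat)" using c7[OF p(4), of 1] by auto
        then show False by simp
      qed
      then consider "n = 0" | "n = 1" by linarith
      then show "\<exists>y1. (y1, x1) \<in> edges X1 N1 \<and> (y1, y2) \<in> ZN"
      proof cases
        case 1 then show ?thesis using p self_edge[OF q1 X1] unfolding q_def by auto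
      next
        case 2 then show ?thesis using p path_edges[OF q1 p(1), of 0] unfolding q_def by auto
      qed
    }
  qed
  show ?thesis unfolding modal_bisim_conv_def using sub H by (rule conjI)
qed

lemma part2:
  assumes q1: "quasi_discrete X1 N1" and q2: "quasi_discrete X2 N2"
    and ne: "\<rho> \<noteq> {}" and mb: "modal_bisim_conv X1 N1 V1 X2 N2 V2 \<rho>"
  shows "\<exists>Z1 Z2. path_pres_bisim X1 N1 V1 X2 N2 V2 \<rho> Z1 Z2"
proof -
  define Z1 where "Z1 = {((p, n), (q, m)). p \<in> paths X1 N1 \<and> q \<in> paths X2 N2 \<and> (n::nat) = m \<and> (\<forall>k. (p k, q k) \<in> \<rho>)}"
  define Z2 where "Z2 = {((q, m), (p, n)). p \<in> paths X1 N1 \<and> q \<in> paths X2 N2 \<and> (n::nat) = m \<and> (\<forall>k. (p k, q k) \<in> \<rho>)}"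
  have sub: "\<rho> \<subseteq> X1 \<times> X2" using mb unfolding modal_bisim_conv_def by blast
  note mb' = mb_sym[OF mb]
  have lp: "\<And>p n y. p \<in> paths X1 N1 \<Longrightarrow> (p n, y) \<in> \<rho> \<Longrightarrow> \<exists>q\<in>paths X2 N2. q n = y \<and> (\<forall>k. (p k, q k) \<in> \<rho>)"
    by (rule lift_path[OF q1 q2 mb])
  have lq: "\<And>q n y. q \<in> paths X2 N2 \<Longrightarrow> (y, q n) \<in> \<rho> \<Longrightarrow> \<exists>p\<in>paths X1 N1. p n = y \<and> (\<forall>k. (p k, q k) \<in> \<rho>)"
  proof -
    fix q n y assume "q \<in> paths X2 N2" "(y, q n) \<in> \<rho>"
    then show "\<exists>p\<in>paths X1 N1. p n = y \<and> (\<forall>k. (p k, q k) \<in> \<rho>)"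
      using lift_path[OF q2 q1 mb', of q n y] by auto
  qed
  have C1: "\<forall>(x1, x2)\<in>\<rho>.
        V1 x1 = V2 x2
      \<and> (\<forall>S2\<in>N2 x2. \<exists>S1\<in>N1 x1. \<forall>y1\<in>S1. \<exists>y2\<in>S2. (y1, y2) \<in> \<rho>)
      \<and> (\<forall>S1\<in>N1 x1. \<exists>S2\<in>N2 x2. \<forall>y2\<in>S2. \<exists>y1\<in>S1. (y1, y2) \<in> \<rho>)"
  proof (intro ballI, clarify, intro conjI ballI)
    fix x1 x2 assume r: "(x1, x2) \<in> \<rho>"
    have X1: "x1 \<in> X1" and X2: "x2 \<in> X2" using r sub by auto
    note m1 = Nmin_prop[OF q1 X1] and m2 = Nmin_prop[OF q2 X2]
    have fw: "\<forall>y1. (x1, y1) \<in> edges X1 N1 \<longrightarrow> (\<exists>y2. (x2, y2) \<in> edges X2 N2 \<and> (y1, y2) \<in> \<rho>)"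
     and bw: "\<forall>y2. (x2, y2) \<in> edges X2 N2 \<longrightarrow> (\<exists>y1. (x1, y1) \<in> edges X1 N1 \<and> (y1, y2) \<in> \<rho>)"
     and V: "V1 x1 = V2 x2"
      using mb r unfolding modal_bisim_conv_def by blast+
    show "V1 x1 = V2 x2" by (rule V)
    fix S2 assume S2: "S2 \<in> N2 x2"
    show "\<exists>S1\<in>N1 x1. \<forall>y1\<in>S1. \<exists>y2\<in>S2. (y1, y2) \<in> \<rho>"
    proof (intro bexI[of _ "Nmin N1 x1"] ballI)
      fix y1 assume "y1 \<in> Nmin N1 x1"
      then obtain y2 where "(x2, y2) \<in> edges X2 N2" "(y1, y2) \<in> \<rho>" using fw X1 unfolding edges_def by blast
      then show "\<exists>y2\<in>S2. (y1, y2) \<in> \<rho>" using m2 S2 unfolding edges_def by blast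
    qed (use m1 in blast)
  next
    fix x1 x2 assume r: "(x1, x2) \<in> \<rho>"
    have X1: "x1 \<in> X1" and X2: "x2 \<in> X2" using r sub by auto
    note m1 = Nmin_prop[OF q1 X1] and m2 = Nmin_prop[OF q2 X2]
    have bw: "\<forall>y2. (x2, y2) \<in> edges X2 N2 \<longrightarrow> (\<exists>y1. (x1, y1) \<in> edges X1 N1 \<and> (y1, y2) \<in> \<rho>)"
      using mb r unfolding modal_bisim_conv_def by blast
    fix S1 assume S1: "S1 \<in> N1 x1"
    show "\<exists>S2\<in>N2 x2. \<forall>y2\<in>S2. \<exists>y1\<in>S1. (y1, y2) \<in> \<rho>"
    proof (intro bexI[of _ "Nmin N2 x2"] ballI)
      fix y2 assume "y2 \<in> Nmin N2 x2"
      then obtain y1 where "(x1, y1) \<in> edges X1 N1" "(y1, y2) \<in> \<rho>" using bw X2 unfolding edges_def by blast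
      then show "\<exists>y1\<in>S1. (y1, y2) \<in> \<rho>" using m1 S1 unfolding edges_def by blast
    qed (use m2 in blast)
  qed
  have C2: "\<forall>(x1, x2)\<in>\<rho>. \<forall>p\<in>paths X1 N1. \<forall>n. p 0 = x1 \<and> n \<noteq> 0 \<longrightarrow>
        (\<exists>q\<in>paths X2 N2. \<exists>m. q 0 = x2 \<and> (p n, q m) \<in> \<rho> \<and> ((p, n), (q, m)) \<in> Z1)"
  proof (intro ballI allI impI, clarify)
    fix x1 x2 p n assume r: "(p 0, x2) \<in> \<rho>" and p: "p \<in> paths X1 N1"
    obtain q where "q \<in> paths X2 N2" "q 0 = x2" "\<forall>k. (p k, q k) \<in> \<rho>" using lp[OF p r] by blast
    then show "\<exists>q\<in>paths X2 N2. \<exists>m. q 0 = x2 \<and> (p n, q m) \<in> \<rho> \<and> ((p, n), (q, m)) \<in> Z1"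
      using p unfolding Z1_def by blast
  qed
  have C3: "\<forall>(x1, x2)\<in>\<rho>. \<forall>p\<in>paths X1 N1. \<forall>n. p n = x1 \<and> n \<noteq> 0 \<longrightarrow>
        (\<exists>q\<in>paths X2 N2. \<exists>m. q m = x2 \<and> (p 0, q 0) \<in> \<rho> \<and> ((p, n), (q, m)) \<in> Z1)"
  proof (intro ballI allI impI, clarify)
    fix x1 x2 p n assume r: "(p n, x2) \<in> \<rho>" and p: "p \<in> paths X1 N1"
    obtain q where "q \<in> paths X2 N2" "q n = x2" "\<forall>k. (p k, q k) \<in> \<rho>" using lp[OF p r] by blast
    then show "\<exists>q\<in>paths X2 N2. \<exists>m. q m = x2 \<and> (p 0, q 0) \<in> \<rho> \<and> ((p, n), (q, m)) \<in> Z1"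
      using p unfolding Z1_def by blast
  qed
  have C5: "\<forall>(x1, x2)\<in>\<rho>. \<forall>q\<in>paths X2 N2. \<forall>m. q 0 = x2 \<and> m \<noteq> 0 \<longrightarrow>
        (\<exists>p\<in>paths X1 N1. \<exists>n. p 0 = x1 \<and> (p n, q m) \<in> \<rho> \<and> ((q, m), (p, n)) \<in> Z2)"
  proof (intro ballI allI impI, clarify)
    fix x1 x2 q m assume r: "(x1, q 0) \<in> \<rho>" and q: "q \<in> paths X2 N2"
    obtain p where "p \<in> paths X1 N1" "p 0 = x1" "\<forall>k. (p k, q k) \<in> \<rho>" using lq[OF q r] by blast
    then show "\<exists>p\<in>paths X1 N1. \<exists>n. p 0 = x1 \<and> (p n, q m) \<in> \<rho> \<and> ((q, m), (p, n)) \<in> Z2"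
      using q unfolding Z2_def by blast
  qed
  have C6: "\<forall>(x1, x2)\<in>\<rho>. \<forall>q\<in>paths X2 N2. \<forall>m. q m = x2 \<and> m \<noteq> 0 \<longrightarrow>
        (\<exists>p\<in>paths X1 N1. \<exists>n. p n = x1 \<and> (p 0, q 0) \<in> \<rho> \<and> ((q, m), (p, n)) \<in> Z2)"
  proof (intro ballI allI impI, clarify)
    fix x1 x2 q m assume r: "(x1, q m) \<in> \<rho>" and q: "q \<in> paths X2 N2"
    obtain p where "p \<in> paths X1 N1" "p m = x1" "\<forall>k. (p k, q k) \<in> \<rho>" using lq[OF q r] by blast
    then show "\<exists>p\<in>paths X1 N1. \<exists>n. p n = x1 \<and> (p 0, q 0) \<in> \<rho> \<and> ((q, m), (p, n)) \<in> Z2"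
      using q unfolding Z2_def by blast
  qed
  have C4: "\<forall>p n q m. ((p, n), (q, m)) \<in> Z1 \<longrightarrow>
        (\<forall>kq. 0 < kq \<and> kq < m \<longrightarrow> (\<exists>kp. 0 < kp \<and> kp < n \<and> (p kp, q kq) \<in> \<rho>))"
    unfolding Z1_def by auto
  have C7: "\<forall>q m p n. ((q, m), (p, n)) \<in> Z2 \<longrightarrow>
        (\<forall>kp. 0 < kp \<and> kp < n \<longrightarrow> (\<exists>kq. 0 < kq \<and> kq < m \<and> (p kp, q kq) \<in> \<rho>))"
    unfolding Z2_def by auto
  have "Z1 \<subseteq> (paths X1 N1 \<times> UNIV) \<times> (paths X2 N2 \<times> UNIV)" "Z2 \<subseteq> (paths X2 N2 \<times> UNIV) \<times> (paths X1 N1 \<times> UNIV)"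
    unfolding Z1_def Z2_def by auto
  then have "path_pres_bisim X1 N1 V1 X2 N2 V2 \<rho> Z1 Z2"
    unfolding path_pres_bisim_def by (intro conjI ne sub C1 C2 C3 C4 C5 C6 C7)
  then show ?thesis by blast
qed

theorem lemma28:
  fixes X1 :: "'a set" and N1 :: "'a \<Rightarrow> 'a set set" and V1 :: "'a \<Rightarrow> 'p::countable set"
    and X2 :: "'b set" and N2 :: "'b \<Rightarrow> 'b set set" and V2 :: "'b \<Rightarrow> 'p set"
  assumes "qd_model X1 N1 V1" and "qd_model X2 N2 V2"
  shows "(\<forall>ZN Z1 Z2. path_pres_bisim X1 N1 V1 X2 N2 V2 ZN Z1 Z2
            \<longrightarrow> modal_bisim_conv X1 N1 V1 X2 N2 V2 ZN)
       \<and> (\<forall>\<rho>. \<rho> \<noteq> {} \<and> modal_bisim_conv X1 N1 V1 X2 N2 V2 \<rho>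
            \<longrightarrow> (\<exists>Z1 Z2. path_pres_bisim X1 N1 V1 X2 N2 V2 \<rho> Z1 Z2))"
  using assms part1 part2 unfolding qd_model_def by blast

end
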